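(* Let $\alpha>-1$, let $n$ be a positive integer, $\lambda=e^{2\pi i/n}$, $\phi(z)=\lambda z$, and $\psi(z)=\sum_{k=0}^\infty\hat\psi_kz^k$ analytic on $\mathbb{D}$ with $C_{\psi,\phi}$ bounded on $L^2_a(dA_\alpha)$. Suppose $\hat\psi_{np+j}\ne0$ for some integers $p\ge0$ and $0<j<n$. Then $W(C_{\psi,\phi})$ contains the closed elliptical region with foci $\hat\psi_0$ and $\lambda^{np+j}\hat\psi_0$, whose major axis has length $\sqrt{|\hat\psi_0|^2|1-e^{2\pi ij/n}|^2+\frac{(np+j)!\,\Gamma(\alpha+2)}{\Gamma(np+j+\alpha+2)}|\hat\psi_{np+j}|^2}$ and whose minor axis has length $\sqrt{\frac{(np+j)!\,\Gamma(\alpha+2)}{\Gamma(np+j+\alpha+2)}}\,|\hat\psi_{np+j}|$.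
   Context: $\mathbb{D}$ is the open unit disc. $L^2_a(dA_\alpha)$ is the weighted Bergman space of analytic $f$ on $\mathbb{D}$ with $\int_{\mathbb{D}}|f|^2dA_\alpha<\infty$, $dA_{\alpha}(z)=(\alpha+1)(1-|z|^2)^{\alpha}dA(z)$, $dA$ normalized area measure. $C_{\psi,\phi}f=\psi\cdot(f\circ\phi)$. $W(T)=\{\langle Tf,f\rangle:\|f\|=1\}$. *)

theory Defs
  imports "HOL-Complex_Analysis.Complex_Analysis"
begin

definition dA :: "real \<Rightarrow> complex measure" where
  "dA \<alpha> = density lborel
     (\<lambda>z. indicator (ball 0 1) z *
        ennreal ((\<alpha> + 1) / pi * (1 - (cmod z)\<^sup>2) powr \<alpha>))"

definition bergman :: "real \<Rightarrow> (complex \<Rightarrow> complex) set" where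
  "bergman \<alpha> = {f. f holomorphic_on ball 0 1 \<and>
      (\<integral>\<^sup>+ z. ennreal ((cmod (f z))\<^sup>2) \<partial>dA \<alpha>) < \<infinity>}"

definition berg_inner :: "real \<Rightarrow> (complex \<Rightarrow> complex) \<Rightarrow> (complex \<Rightarrow> complex) \<Rightarrow> complex" where
  "berg_inner \<alpha> f g = (\<integral> z. f z * cnj (g z) \<partial>dA \<alpha>)"

definition berg_norm :: "real \<Rightarrow> (complex \<Rightarrow> complex) \<Rightarrow> real" where
  "berg_norm \<alpha> f = sqrt (\<integral> z. (cmod (f z))\<^sup>2 \<partial>dA \<alpha>)"

definition wcomp :: "(complex \<Rightarrow> complex) \<Rightarrow> (complex \<Rightarrow> complex) \<Rightarrow> (complex \<Rightarrow> complex) \<Rightarrow> (complex \<Rightarrow> complex)" where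
  "wcomp \<psi> \<phi> f = (\<lambda>z. \<psi> z * f (\<phi> z))"

definition bounded_on_bergman :: "real \<Rightarrow> ((complex \<Rightarrow> complex) \<Rightarrow> (complex \<Rightarrow> complex)) \<Rightarrow> bool" where
  "bounded_on_bergman \<alpha> T \<longleftrightarrow>
     (\<forall>f\<in>bergman \<alpha>. T f \<in> bergman \<alpha>) \<and>
     (\<exists>M. \<forall>f\<in>bergman \<alpha>. berg_norm \<alpha> (T f) \<le> M * berg_norm \<alpha> f)"

definition num_range :: "real \<Rightarrow> ((complex \<Rightarrow> complex) \<Rightarrow> (complex \<Rightarrow> complex)) \<Rightarrow> complex set" where
  "num_range \<alpha> T = {berg_inner \<alpha> (T f) f | f. f \<in> bergman \<alpha> \<and> berg_norm \<alpha> f = 1}"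

definition taylor_coeff :: "(complex \<Rightarrow> complex) \<Rightarrow> nat \<Rightarrow> complex" where
  "taylor_coeff \<psi> k = (deriv ^^ k) \<psi> 0 / fact k"

definition ellipse_region :: "complex \<Rightarrow> complex \<Rightarrow> real \<Rightarrow> complex set" where
  "ellipse_region a b L = {w. cmod (w - a) + cmod (w - b) \<le> L}"

definition ellipse_minor_axis :: "complex \<Rightarrow> complex \<Rightarrow> real \<Rightarrow> real" where
  "ellipse_minor_axis a b L = sqrt (L\<^sup>2 - (cmod (a - b))\<^sup>2)"

end

theory Submission
  imports Defs
begin
lemma lborel_complex_prod:
  "distr (lborel \<Otimes>\<^sub>M lborel) borel (\<lambda>(x,y). Complex x y) = (lborel :: complex measure)"
proof (rule lborel_eqI[symmetric])
  have m: "(\<lambda>(x,y). Complex x y) \<in> borel_measurable (lborel \<Otimes>\<^sub>M (lborel::real measure))"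
    by (simp add: Complex_eq case_prod_beta)
  fix l u :: complex
  assume le: "\<And>b. b \<in> Basis \<Longrightarrow> l \<bullet> b \<le> u \<bullet> b"
  have "Re l \<le> Re u" "Im l \<le> Im u" using le[of 1] le[of "\<i>"] by (auto simp: Basis_complex_def)
  have pre: "(\<lambda>(x,y). Complex x y) -` box l u \<inter> space (lborel \<Otimes>\<^sub>M lborel) = {Re l<..<Re u} \<times> {Im l<..<Im u}"
    by (auto simp: box_def Basis_complex_def space_pair_measure inner_complex_def)
  show "emeasure (distr (lborel \<Otimes>\<^sub>M lborel) borel (\<lambda>(x,y). Complex x y)) (box l u) = (\<Prod>b\<in>Basis. (u - l) \<bullet> b)"
    using \<open>Re l \<le> Re u\<close> \<open>Im l \<le> Im u\<close>
    by (simp add: emeasure_distr[OF m] pre lborel.emeasure_pair_measure_Times Basis_complex_def inner_complex_def ennreal_mult)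
qed simp

lemma sets_lborel_pair: "sets (lborel \<Otimes>\<^sub>M lborel) = sets (borel :: (real \<times> real) measure)"
  by (metis borel_prod sets_lborel sets_pair_measure_cong)

lemma meas_pair_borel: fixes f :: "real \<times> real \<Rightarrow> 'b::topological_space" shows "f \<in> borel_measurable borel \<Longrightarrow> f \<in> borel_measurable (lborel \<Otimes>\<^sub>M (lborel::real measure))"
  by (subst measurable_cong_sets[OF sets_lborel_pair refl])

lemma meas_Complex: "(\<lambda>w::real\<times>real. Complex (fst w) (snd w)) \<in> borel_measurable borel"
  by (intro borel_measurable_continuous_onI) (simp add: Complex_eq continuous_intros)

lemma meas_fComplex: "f \<in> borel_measurable borel \<Longrightarrow> (\<lambda>w::real\<times>real. f (Complex (fst w) (snd w))) \<in> borel_measurable borel"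
  using measurable_compose[OF meas_Complex] by blast

lemma nn_shear1:
  fixes f :: "real \<times> real \<Rightarrow> ennreal" and a :: real
  assumes [measurable]: "f \<in> borel_measurable borel"
  shows "(\<integral>\<^sup>+ w. f (fst w + a * snd w, snd w) \<partial>(lborel \<Otimes>\<^sub>M lborel)) = (\<integral>\<^sup>+ w. f w \<partial>(lborel \<Otimes>\<^sub>M lborel))"
proof -
  have mf: "f \<in> borel_measurable (lborel \<Otimes>\<^sub>M lborel)"
    by (rule meas_pair_borel) simp
  have mg: "(\<lambda>w. f (fst w + a * snd w, snd w)) \<in> borel_measurable (lborel \<Otimes>\<^sub>M lborel)"
    by (simp add: borel_prod)
  have "(\<integral>\<^sup>+ w. f (fst w + a * snd w, snd w) \<partial>(lborel \<Otimes>\<^sub>M lborel)) =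
        (\<integral>\<^sup>+ y. \<integral>\<^sup>+ x. f (x + a * y, y) \<partial>lborel \<partial>lborel)"
    using lborel_pair.nn_integral_snd[OF mg] by simp
  also have "\<dots> = (\<integral>\<^sup>+ y. \<integral>\<^sup>+ x. f (x, y) \<partial>lborel \<partial>lborel)"
  proof (rule nn_integral_cong)
    fix y :: real
    show "(\<integral>\<^sup>+ x. f (x + a * y, y) \<partial>lborel) = (\<integral>\<^sup>+ x. f (x, y) \<partial>lborel)"
      using nn_integral_real_affine[of "\<lambda>x. f (x, y)" 1 "a*y"] by (simp add: add.commute)
  qed
  also have "\<dots> = (\<integral>\<^sup>+ w. f w \<partial>(lborel \<Otimes>\<^sub>M lborel))"
    using lborel_pair.nn_integral_snd[OF mf] by simp
  finally show ?thesis .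
qed

lemma nn_shear2:
  fixes f :: "real \<times> real \<Rightarrow> ennreal" and b :: real
  assumes [measurable]: "f \<in> borel_measurable borel"
  shows "(\<integral>\<^sup>+ w. f (fst w, snd w + b * fst w) \<partial>(lborel \<Otimes>\<^sub>M lborel)) = (\<integral>\<^sup>+ w. f w \<partial>(lborel \<Otimes>\<^sub>M lborel))"
proof -
  have mf: "f \<in> borel_measurable (lborel \<Otimes>\<^sub>M lborel)"
    by (rule meas_pair_borel) simp
  have mg: "(\<lambda>w. f (fst w, snd w + b * fst w)) \<in> borel_measurable (lborel \<Otimes>\<^sub>M lborel)"
    by (simp add: borel_prod)
  have "(\<integral>\<^sup>+ w. f (fst w, snd w + b * fst w) \<partial>(lborel \<Otimes>\<^sub>M lborel)) =
        (\<integral>\<^sup>+ x. \<integral>\<^sup>+ y. f (x, y + b * x) \<partial>lborel \<partial>lborel)"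
    using lborel.nn_integral_fst[OF mg] by simp
  also have "\<dots> = (\<integral>\<^sup>+ x. \<integral>\<^sup>+ y. f (x, y) \<partial>lborel \<partial>lborel)"
  proof (rule nn_integral_cong)
    fix x :: real
    show "(\<integral>\<^sup>+ y. f (x, y + b * x) \<partial>lborel) = (\<integral>\<^sup>+ y. f (x, y) \<partial>lborel)"
      using nn_integral_real_affine[of "\<lambda>y. f (x, y)" 1 "b*x"] by (simp add: add.commute)
  qed
  also have "\<dots> = (\<integral>\<^sup>+ w. f w \<partial>(lborel \<Otimes>\<^sub>M lborel))"
    using lborel.nn_integral_fst[OF mf] by simp
  finally show ?thesis .
qed

lemma nn_complex_via_prod:
  fixes f :: "complex \<Rightarrow> ennreal"
  assumes [measurable]: "f \<in> borel_measurable borel"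
  shows "(\<integral>\<^sup>+ z. f z \<partial>lborel) = (\<integral>\<^sup>+ w. f (Complex (fst w) (snd w)) \<partial>(lborel \<Otimes>\<^sub>M lborel))"
proof -
  have m: "(\<lambda>(x,y). Complex x y) \<in> measurable (lborel \<Otimes>\<^sub>M (lborel::real measure)) borel"
    by (simp add: Complex_eq case_prod_beta)
  have "(\<integral>\<^sup>+ z. f z \<partial>lborel) = (\<integral>\<^sup>+ z. f z \<partial>distr (lborel \<Otimes>\<^sub>M lborel) borel (\<lambda>(x,y). Complex x y))"
    by (simp add: lborel_complex_prod)
  also have "\<dots> = (\<integral>\<^sup>+ w. f (Complex (fst w) (snd w)) \<partial>(lborel \<Otimes>\<^sub>M lborel))"
    by (subst nn_integral_distr[OF m]) (simp_all add: case_prod_beta)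
  finally show ?thesis .
qed

lemma nn_cshear1:
  fixes f :: "complex \<Rightarrow> ennreal"
  assumes [measurable]: "f \<in> borel_measurable borel"
  shows "(\<integral>\<^sup>+ z. f (z + of_real (a * Im z)) \<partial>lborel) = (\<integral>\<^sup>+ z. f z \<partial>lborel)"
proof -
  have "(\<integral>\<^sup>+ z. f (z + of_real (a * Im z)) \<partial>lborel) =
     (\<integral>\<^sup>+ w. (\<lambda>w. f (Complex (fst w) (snd w))) (fst w + a * snd w, snd w) \<partial>(lborel \<Otimes>\<^sub>M lborel))"
    by (subst nn_complex_via_prod) (auto simp: Complex_eq algebra_simps intro!: nn_integral_cong)
  also have "\<dots> = (\<integral>\<^sup>+ w. f (Complex (fst w) (snd w)) \<partial>(lborel \<Otimes>\<^sub>M lborel))"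
    by (rule nn_shear1) (rule meas_fComplex[OF assms])
  also have "\<dots> = (\<integral>\<^sup>+ z. f z \<partial>lborel)"
    by (subst nn_complex_via_prod) simp_all
  finally show ?thesis .
qed

lemma nn_cshear2:
  fixes f :: "complex \<Rightarrow> ennreal"
  assumes [measurable]: "f \<in> borel_measurable borel"
  shows "(\<integral>\<^sup>+ z. f (z + \<i> * of_real (b * Re z)) \<partial>lborel) = (\<integral>\<^sup>+ z. f z \<partial>lborel)"
proof -
  have "(\<integral>\<^sup>+ z. f (z + \<i> * of_real (b * Re z)) \<partial>lborel) =
     (\<integral>\<^sup>+ w. (\<lambda>w. f (Complex (fst w) (snd w))) (fst w, snd w + b * fst w) \<partial>(lborel \<Otimes>\<^sub>M lborel))"
    by (subst nn_complex_via_prod) (auto simp: Complex_eq algebra_simps intro!: nn_integral_cong)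
  also have "\<dots> = (\<integral>\<^sup>+ w. f (Complex (fst w) (snd w)) \<partial>(lborel \<Otimes>\<^sub>M lborel))"
    by (rule nn_shear2) (rule meas_fComplex[OF assms])
  also have "\<dots> = (\<integral>\<^sup>+ z. f z \<partial>lborel)"
    by (subst nn_complex_via_prod) simp_all
  finally show ?thesis .
qed

lemma rot_shear_eq:
  fixes \<omega> z :: complex
  assumes "cmod \<omega> = 1" "\<omega> \<noteq> -1"
  defines "t \<equiv> Im \<omega> / (1 + Re \<omega>)"
  shows "\<omega> * z = (\<lambda>z. z + of_real (- t * Im z)) ((\<lambda>z. z + \<i> * of_real (Im \<omega> * Re z)) ((\<lambda>z. z + of_real (- t * Im z)) z))"
proof -
  have sq: "(Re \<omega>)^2 + (Im \<omega>)^2 = 1" using assms(1) by (simp add: cmod_def)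
  have "1 + Re \<omega> \<noteq> 0"
  proof
    assume "1 + Re \<omega> = 0"
    then have "Re \<omega> = -1" by simp
    with sq have "Im \<omega> = 0" by simp
    with \<open>Re \<omega> = -1\<close> have "\<omega> = -1" by (simp add: complex_eq_iff)
    with assms(2) show False by simp
  qed
  then have h2: "t * (1 + Re \<omega>) = Im \<omega>" by (simp add: t_def)
  have h1: "Im \<omega> * t = 1 - Re \<omega>"
  proof -
    have "Im \<omega> * t * (1 + Re \<omega>) = Im \<omega> * Im \<omega>"
      using h2 by (simp add: mult.assoc)
    also have "\<dots> = (1 - Re \<omega>) * (1 + Re \<omega>)"
      using sq by (simp add: algebra_simps power2_eq_square)
    finally show ?thesis using \<open>1 + Re \<omega> \<noteq> 0\<close> by simp
  qed
  have e1: "Re z - t * Im z - t * (Im z + Im \<omega> * (Re z - t * Im z)) = Re \<omega> * Re z - Im \<omega> * Im z"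
  proof -
    have "Re z - t * Im z - t * (Im z + Im \<omega> * (Re z - t * Im z))
        = Re z * (1 - Im \<omega> * t) - Im z * (t * (1 + Re \<omega>)) - Im z * t * (1 - Re \<omega> - Im \<omega> * t)"
      by (simp add: algebra_simps)
    also have "\<dots> = Re \<omega> * Re z - Im \<omega> * Im z" by (simp add: h1 h2)
    finally show ?thesis .
  qed
  have e2: "Im z + Im \<omega> * (Re z - t * Im z) = Im \<omega> * Re z + Re \<omega> * Im z"
  proof -
    have "Im z + Im \<omega> * (Re z - t * Im z) = Im \<omega> * Re z + Im z * (1 - Im \<omega> * t)"
      by (simp add: algebra_simps)
    also have "\<dots> = Im \<omega> * Re z + Re \<omega> * Im z" by (subst h1) simp
    finally show ?thesis .
  qed
  let ?R = "(\<lambda>z. z + of_real (- t * Im z)) ((\<lambda>z. z + \<i> * of_real (Im \<omega> * Re z)) ((\<lambda>z. z + of_real (- t * Im z)) z))"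
  have r: "Re ?R = Re z - t * Im z - t * (Im z + Im \<omega> * (Re z - t * Im z))" by simp
  have i: "Im ?R = Im z + Im \<omega> * (Re z - t * Im z)" by simp
  show ?thesis
  proof (rule complex_eqI)
    show "Re (\<omega> * z) = Re ?R" unfolding r e1 by simp
    show "Im (\<omega> * z) = Im ?R" unfolding i e2 by simp
  qed
qed

lemma nn_rot_aux:
  fixes f :: "complex \<Rightarrow> ennreal" and \<omega> :: complex
  assumes [measurable]: "f \<in> borel_measurable borel" and "cmod \<omega> = 1" "\<omega> \<noteq> -1"
  shows "(\<integral>\<^sup>+ z. f (\<omega> * z) \<partial>lborel) = (\<integral>\<^sup>+ z. f z \<partial>lborel)"
proof -
  define t where "t = Im \<omega> / (1 + Re \<omega>)"
  define S1 where "S1 = (\<lambda>z::complex. z + of_real (- t * Im z))"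
  define S2 where "S2 = (\<lambda>z::complex. z + \<i> * of_real (Im \<omega> * Re z))"
  have mS1: "S1 \<in> borel_measurable borel" unfolding S1_def
    by (intro borel_measurable_continuous_onI) (simp add: continuous_intros)
  have mS2: "S2 \<in> borel_measurable borel" unfolding S2_def
    by (intro borel_measurable_continuous_onI) (simp add: continuous_intros)
  have m1: "(\<lambda>z. f (S1 z)) \<in> borel_measurable borel" using measurable_compose[OF mS1 assms(1)] by simp
  have m2: "(\<lambda>z. f (S1 (S2 z))) \<in> borel_measurable borel" using measurable_compose[OF mS2 m1] by simp
  have "(\<integral>\<^sup>+ z. f (\<omega> * z) \<partial>lborel) = (\<integral>\<^sup>+ z. f (S1 (S2 (S1 z))) \<partial>lborel)"
    using rot_shear_eq[OF assms(2,3)] unfolding S1_def S2_def t_def by simp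
  also have "\<dots> = (\<integral>\<^sup>+ z. f (S1 (S2 z)) \<partial>lborel)"
    unfolding S1_def using nn_cshear1[OF m2[unfolded S1_def], of "-t"] by simp
  also have "\<dots> = (\<integral>\<^sup>+ z. f (S1 z) \<partial>lborel)"
    unfolding S2_def using nn_cshear2[OF m1, of "Im \<omega>"] by simp
  also have "\<dots> = (\<integral>\<^sup>+ z. f z \<partial>lborel)"
    unfolding S1_def using nn_cshear1[OF assms(1), of "-t"] by simp
  finally show ?thesis .
qed

lemma nn_rot:
  fixes f :: "complex \<Rightarrow> ennreal" and \<omega> :: complex
  assumes [measurable]: "f \<in> borel_measurable borel" and "cmod \<omega> = 1"
  shows "(\<integral>\<^sup>+ z. f (\<omega> * z) \<partial>lborel) = (\<integral>\<^sup>+ z. f z \<partial>lborel)"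
proof (cases "\<omega> = -1")
  case False then show ?thesis using nn_rot_aux assms by blast
next
  case True
  have mi: "(\<lambda>z. f (\<i> * z)) \<in> borel_measurable borel"
    using measurable_compose[OF _ assms(1), of "\<lambda>z. \<i> * z"] by simp
  have "(\<integral>\<^sup>+ z. f (\<omega> * z) \<partial>lborel) = (\<integral>\<^sup>+ z. f (\<i> * (\<i> * z)) \<partial>lborel)"
    using True by simp
  also have "\<dots> = (\<integral>\<^sup>+ z. f (\<i> * z) \<partial>lborel)"
    by (rule nn_rot_aux[OF mi]) (auto simp: complex_eq_iff)
  also have "\<dots> = (\<integral>\<^sup>+ z. f z \<partial>lborel)"
    by (rule nn_rot_aux[OF assms(1)]) (auto simp: complex_eq_iff)
  finally show ?thesis .
qed

definition Wt :: "real \<Rightarrow> complex \<Rightarrow> ennreal" where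
  "Wt \<alpha> z = indicator (ball 0 1) z * ennreal ((\<alpha> + 1) / pi * (1 - (cmod z)\<^sup>2) powr \<alpha>)"

lemma dA_Wt: "dA \<alpha> = density lborel (Wt \<alpha>)"
  unfolding dA_def Wt_def by simp

lemma Wt_meas[measurable]: "Wt \<alpha> \<in> borel_measurable borel"
proof -
  have [measurable]: "(\<lambda>x::complex. ((\<alpha>::real) + 1) / pi * (1 - (cmod x)\<^sup>2) powr \<alpha>) \<in> borel_measurable borel"
    by measurable
  have [measurable]: "Measurable.pred borel (\<lambda>x::complex. x \<in> ball 0 1)"
    by (simp add: pred_def)
  show ?thesis unfolding Wt_def by measurable
qed

lemma Wt_rot: "cmod \<omega> = 1 \<Longrightarrow> Wt \<alpha> (\<omega> * z) = Wt \<alpha> z"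
proof -
  assume w: "cmod \<omega> = 1"
  have "(\<omega> * z \<in> ball 0 1) = (z \<in> ball 0 1)" using w by (simp add: norm_mult)
  then show ?thesis unfolding Wt_def using w by (simp add: norm_mult indicator_def)
qed

lemma sets_dA[simp, measurable_cong]: "sets (dA \<alpha>) = sets borel"
  by (simp add: dA_Wt)

lemma space_dA[simp]: "space (dA \<alpha>) = UNIV"
  by (simp add: dA_Wt)

lemma nn_dA: "g \<in> borel_measurable borel \<Longrightarrow> (\<integral>\<^sup>+ z. g z \<partial>dA \<alpha>) = (\<integral>\<^sup>+ z. Wt \<alpha> z * g z \<partial>lborel)"
  unfolding dA_Wt by (subst nn_integral_density) auto

lemma nn_dA_rot:
  assumes [measurable]: "g \<in> borel_measurable borel" and w: "cmod \<omega> = 1"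
  shows "(\<integral>\<^sup>+ z. g (\<omega> * z) \<partial>dA \<alpha>) = (\<integral>\<^sup>+ z. g z \<partial>dA \<alpha>)"
proof -
  have m: "(\<lambda>z. g (\<omega> * z)) \<in> borel_measurable borel"
    using measurable_compose[OF _ assms(1), of "\<lambda>z. \<omega> * z"] by simp
  have m2: "(\<lambda>z. Wt \<alpha> z * g z) \<in> borel_measurable borel" by measurable
  have "(\<integral>\<^sup>+ z. g (\<omega> * z) \<partial>dA \<alpha>) = (\<integral>\<^sup>+ z. Wt \<alpha> z * g (\<omega> * z) \<partial>lborel)"
    by (rule nn_dA[OF m])
  also have "\<dots> = (\<integral>\<^sup>+ z. (\<lambda>z. Wt \<alpha> z * g z) (\<omega> * z) \<partial>lborel)"
    using Wt_rot[OF w] by simp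
  also have "\<dots> = (\<integral>\<^sup>+ z. Wt \<alpha> z * g z \<partial>lborel)"
    by (rule nn_rot[OF m2 w])
  also have "\<dots> = (\<integral>\<^sup>+ z. g z \<partial>dA \<alpha>)"
    by (rule nn_dA[symmetric]) simp
  finally show ?thesis .
qed

lemma distr_dA_rot:
  assumes w: "cmod \<omega> = 1"
  shows "distr (dA \<alpha>) borel (\<lambda>z. \<omega> * z) = dA \<alpha>"
proof (rule measure_eqI)
  show "sets (distr (dA \<alpha>) borel (\<lambda>z. \<omega> * z)) = sets (dA \<alpha>)" by simp
  fix A assume A: "A \<in> sets (distr (dA \<alpha>) borel (\<lambda>z. \<omega> * z))"
  then have [measurable]: "A \<in> sets borel" by simp
  have mT: "(\<lambda>z. \<omega> * z) \<in> measurable (dA \<alpha>) borel" by simp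
  have pre: "(\<lambda>z. \<omega> * z) -` A \<in> sets (dA \<alpha>)"
    using measurable_sets[OF mT \<open>A \<in> sets borel\<close>] by simp
  have "emeasure (distr (dA \<alpha>) borel (\<lambda>z. \<omega> * z)) A = emeasure (dA \<alpha>) ((\<lambda>z. \<omega> * z) -` A)"
    using emeasure_distr[OF mT \<open>A \<in> sets borel\<close>] by simp
  also have "\<dots> = (\<integral>\<^sup>+ z. indicator ((\<lambda>z. \<omega> * z) -` A) z \<partial>dA \<alpha>)"
    using pre by simp
  also have "\<dots> = (\<integral>\<^sup>+ z. indicator A (\<omega> * z) \<partial>dA \<alpha>)"
    by (simp add: indicator_def)
  also have "\<dots> = (\<integral>\<^sup>+ z. indicator A z \<partial>dA \<alpha>)"
    by (rule nn_dA_rot[OF _ w]) simp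
  also have "\<dots> = emeasure (dA \<alpha>) A" by simp
  finally show "emeasure (distr (dA \<alpha>) borel (\<lambda>z. \<omega> * z)) A = emeasure (dA \<alpha>) A" .
qed

lemma integral_dA_rot:
  fixes F :: "complex \<Rightarrow> 'b::{banach, second_countable_topology}"
  assumes [measurable]: "F \<in> borel_measurable borel" and w: "cmod \<omega> = 1"
  shows "(\<integral> z. F (\<omega> * z) \<partial>dA \<alpha>) = (\<integral> z. F z \<partial>dA \<alpha>)"
    and "integrable (dA \<alpha>) (\<lambda>z. F (\<omega> * z)) \<longleftrightarrow> integrable (dA \<alpha>) F"
proof -
  have mT: "(\<lambda>z. \<omega> * z) \<in> measurable (dA \<alpha>) borel" by simp
  show "(\<integral> z. F (\<omega> * z) \<partial>dA \<alpha>) = (\<integral> z. F z \<partial>dA \<alpha>)"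
    using integral_distr[OF mT assms(1)] distr_dA_rot[OF w] by simp
  show "integrable (dA \<alpha>) (\<lambda>z. F (\<omega> * z)) \<longleftrightarrow> integrable (dA \<alpha>) F"
    using integrable_distr_eq[OF mT assms(1)] distr_dA_rot[OF w] by simp
qed

lemma emeasure_cball_complex: "r \<ge> 0 \<Longrightarrow> emeasure lborel (cball (0::complex) r) = ennreal (pi * r^2)"
  using emeasure_cball[of r "0::complex"] by (simp add: eval_unit_ball_vol)

lemma cmod_le_sqrt_iff: "x \<ge> 0 \<Longrightarrow> (cmod z \<le> sqrt x) = ((cmod z)\<^sup>2 \<le> x)"
  by (metis norm_ge_zero real_sqrt_abs real_sqrt_le_iff abs_of_nonneg)

lemma distr_sq:
  "distr (density lborel (indicator (cball (0::complex) 1))) borel (\<lambda>z. (cmod z)\<^sup>2)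
     = density lborel (\<lambda>t. ennreal pi * indicator {0<..<1} t)"
  (is "?M = ?N")
proof (rule measure_eqI_lessThan)
  show "sets ?M = sets borel" "sets ?N = sets borel" by simp_all
  have mT: "(\<lambda>z::complex. (cmod z)\<^sup>2) \<in> measurable (density lborel (indicator (cball (0::complex) 1))) borel"
    by simp
  have eM: "emeasure ?M {x<..} = emeasure lborel (cball 0 1 \<inter> {z. x < (cmod z)\<^sup>2})" for x
  proof -
    have "emeasure ?M {x<..} = emeasure (density lborel (indicator (cball (0::complex) 1))) ((\<lambda>z. (cmod z)\<^sup>2) -` {x<..})"
      using emeasure_distr[OF mT, of "{x<..}"] by simp
    also have "\<dots> = emeasure lborel (cball 0 1 \<inter> ((\<lambda>z::complex. (cmod z)\<^sup>2) -` {x<..}))"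
    proof (rule emeasure_restricted)
      show "(\<lambda>z::complex. (cmod z)\<^sup>2) -` {x<..} \<in> sets lborel"
      proof -
        have "open ((\<lambda>z::complex. (cmod z)\<^sup>2) -` {x<..})"
          by (intro open_vimage) (auto intro!: continuous_intros)
        then show ?thesis by simp
      qed
    qed auto
    also have "(\<lambda>z::complex. (cmod z)\<^sup>2) -` {x<..} = {z. x < (cmod z)\<^sup>2}" by auto
    finally show ?thesis .
  qed
  have vals: "emeasure lborel (cball 0 1 \<inter> {z::complex. x < (cmod z)\<^sup>2}) = ennreal (pi * (if x < 0 then 1 else if x < 1 then 1 - x else 0))" for x
  proof (cases "x < 0")
    case True
    then have "cball 0 1 \<inter> {z::complex. x < (cmod z)\<^sup>2} = cball 0 1"
      by (auto intro: less_le_trans[OF _ zero_le_power2])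
    then show ?thesis using True emeasure_cball_complex[of 1] by simp
  next
    case False
    show ?thesis
    proof (cases "x < 1")
      case True
      have eq: "cball 0 1 \<inter> {z::complex. x < (cmod z)\<^sup>2} = cball 0 1 - cball 0 (sqrt x)"
        using False cmod_le_sqrt_iff[of x] by auto
      have sx: "sqrt x \<le> 1" using True by simp
      have sub: "cball (0::complex) (sqrt x) \<subseteq> cball 0 1"
      proof (rule subsetI)
        fix z :: complex assume "z \<in> cball 0 (sqrt x)"
        then have "cmod z \<le> sqrt x" by simp
        then have "cmod z \<le> 1" using sx by linarith
        then show "z \<in> cball 0 1" by simp
      qed
      have "emeasure lborel (cball (0::complex) 1 - cball 0 (sqrt x)) = emeasure lborel (cball (0::complex) 1) - emeasure lborel (cball (0::complex) (sqrt x))"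
        by (rule emeasure_Diff) (use sub emeasure_lborel_cball_finite[of "0::complex" "sqrt x"] in auto)
      also have "\<dots> = ennreal pi - ennreal (pi * x)"
        using False emeasure_cball_complex[of 1] emeasure_cball_complex[of "sqrt x"] by simp
      also have "\<dots> = ennreal (pi * (1 - x))"
        using True False by (subst ennreal_minus) (auto simp: algebra_simps)
      finally show ?thesis using eq True False by simp
    next
      case False2: False
      have "cball 0 1 \<inter> {z::complex. x < (cmod z)\<^sup>2} = {}"
      proof -
        have "(cmod z)\<^sup>2 \<le> 1" if "cmod z \<le> 1" for z :: complex
          using that by (simp add: power_le_one)
        then show ?thesis using False2 by (auto simp: not_less) (smt (verit))
      qed
      then show ?thesis using False False2 by simp
    qed
  qed
  have eN: "emeasure ?N {x<..} = ennreal (pi * (if x < 0 then 1 else if x < 1 then 1 - x else 0))" for x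
  proof -
    have "emeasure ?N {x<..} = (\<integral>\<^sup>+ t. ennreal pi * indicator ({0<..<1} \<inter> {x<..}) t \<partial>lborel)"
      by (subst emeasure_density) (auto intro!: nn_integral_cong simp: indicator_def)
    also have "\<dots> = ennreal pi * emeasure lborel ({0<..<1} \<inter> {x<..})"
      by (subst nn_integral_cmult_indicator) auto
    also have "{0<..<1} \<inter> {x<..} = {max 0 x<..<(1::real)}" by auto
    also have "ennreal pi * emeasure lborel {max 0 x<..<(1::real)} = ennreal (pi * (if x < 0 then 1 else if x < 1 then 1 - x else 0))"
      by (auto simp: ennreal_mult[symmetric] max_def)
    finally show ?thesis .
  qed
  fix x :: real
  show "emeasure ?M {x<..} < \<infinity>" using eM vals by simp
  show "emeasure ?M {x<..} = emeasure ?N {x<..}" using eM vals eN by simp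
qed

lemma beta_arith:
  assumes "\<alpha> > -1"
  shows "(\<alpha> + 1) * Beta (real K + 1) (\<alpha> + 1) = fact K * Gamma (\<alpha> + 2) / Gamma (real K + \<alpha> + 2)"
proof -
  have nz: "\<alpha> + 1 \<notin> \<int>\<^sub>\<le>\<^sub>0" using assms by (auto elim!: nonpos_Ints_cases)
  have g1: "Gamma (real K + 1) = fact K" using Gamma_fact[of K] by (simp add: add.commute)
  have g2: "Gamma (\<alpha> + 2) = (\<alpha> + 1) * Gamma (\<alpha> + 1)"
    using Gamma_plus1[OF nz] by (simp add: add.assoc)
  have g3: "real K + 1 + (\<alpha> + 1) = real K + \<alpha> + 2" by simp
  show ?thesis unfolding Beta_def g3 g1 g2 by simp
qed

lemma beta_has_integral:
  assumes "\<alpha> > -1"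
  shows "((\<lambda>t. (\<alpha> + 1) * ((1 - t) powr \<alpha> * t ^ K)) has_integral
            (fact K * Gamma (\<alpha> + 2) / Gamma (real K + \<alpha> + 2))) {0<..<1}"
proof -
  have "((\<lambda>t. t powr (real K + 1 - 1) * (1 - t) powr (\<alpha> + 1 - 1)) has_integral Beta (real K + 1) (\<alpha> + 1)) {0..1}"
    by (rule has_integral_Beta_real) (use assms in auto)
  then have "((\<lambda>t. t powr (real K + 1 - 1) * (1 - t) powr (\<alpha> + 1 - 1)) has_integral Beta (real K + 1) (\<alpha> + 1)) {0<..<1}"
    by (simp add: has_integral_Icc_iff_Ioo)
  then have "((\<lambda>t. (1 - t) powr \<alpha> * t ^ K) has_integral Beta (real K + 1) (\<alpha> + 1)) {0<..<1}"
    by (rule has_integral_cong[THEN iffD1, rotated]) (simp add: powr_realpow)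
  then have "((\<lambda>t. (\<alpha> + 1) * ((1 - t) powr \<alpha> * t ^ K)) has_integral (\<alpha> + 1) * Beta (real K + 1) (\<alpha> + 1)) {0<..<1}"
    by (rule has_integral_mult_right)
  then show ?thesis using beta_arith[OF assms] by simp
qed

lemma rad_nn:
  assumes a: "\<alpha> > -1"
  shows "(\<integral>\<^sup>+ z. ennreal ((cmod z) ^ (2 * K)) \<partial>dA \<alpha>) = ennreal (fact K * Gamma (\<alpha> + 2) / Gamma (real K + \<alpha> + 2))"
proof -
  define G where "G t = ennreal ((\<alpha> + 1) / pi * (1 - t) powr \<alpha> * t ^ K)" for t :: real
  have [measurable]: "G \<in> borel_measurable borel" unfolding G_def by measurable
  have pw: "Wt \<alpha> z * ennreal ((cmod z) ^ (2 * K)) = indicator (cball 0 1) z * G ((cmod z)\<^sup>2)" for z :: complex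
  proof (cases "cmod z < 1")
    case True
    have nn: "0 \<le> (\<alpha> + 1) / pi * (1 - (cmod z)\<^sup>2) powr \<alpha>" using a by simp
    have "Wt \<alpha> z * ennreal ((cmod z) ^ (2 * K)) = ennreal ((\<alpha> + 1) / pi * (1 - (cmod z)\<^sup>2) powr \<alpha>) * ennreal ((cmod z) ^ (2 * K))"
      using True by (simp add: Wt_def)
    also have "\<dots> = ennreal ((\<alpha> + 1) / pi * (1 - (cmod z)\<^sup>2) powr \<alpha> * (cmod z) ^ (2 * K))"
      by (rule ennreal_mult[symmetric]) (use nn in auto)
    also have "\<dots> = indicator (cball 0 1) z * G ((cmod z)\<^sup>2)"
      using True by (simp add: G_def power_mult)
    finally show ?thesis .
  next
    case False
    show ?thesis
    proof (cases "cmod z = 1")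
      case True then show ?thesis by (simp add: Wt_def G_def)
    next
      case False2: False
      with False have "cmod z > 1" by simp
      then show ?thesis by (simp add: Wt_def G_def indicator_def)
    qed
  qed
  have [measurable]: "(indicator (cball (0::complex) 1) :: complex \<Rightarrow> ennreal) \<in> borel_measurable borel"
    by (rule borel_measurable_indicator) simp
  have mT: "(\<lambda>z::complex. (cmod z)\<^sup>2) \<in> measurable (density lborel (indicator (cball (0::complex) 1))) borel"
    by simp
  have "(\<integral>\<^sup>+ z. ennreal ((cmod z) ^ (2 * K)) \<partial>dA \<alpha>) = (\<integral>\<^sup>+ z. Wt \<alpha> z * ennreal ((cmod z) ^ (2 * K)) \<partial>lborel)"
    by (rule nn_dA) simp
  also have "\<dots> = (\<integral>\<^sup>+ z. indicator (cball 0 1) z * G ((cmod z)\<^sup>2) \<partial>lborel)"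
    by (simp add: pw)
  also have "\<dots> = (\<integral>\<^sup>+ z. G ((cmod z)\<^sup>2) \<partial>density lborel (indicator (cball (0::complex) 1)))"
    by (subst nn_integral_density) auto
  also have "\<dots> = (\<integral>\<^sup>+ t. G t \<partial>distr (density lborel (indicator (cball (0::complex) 1))) borel (\<lambda>z. (cmod z)\<^sup>2))"
    by (subst nn_integral_distr[OF mT]) auto
  also have "\<dots> = (\<integral>\<^sup>+ t. G t \<partial>density lborel (\<lambda>t. ennreal pi * indicator {0<..<1} t))"
    by (simp add: distr_sq)
  also have "\<dots> = (\<integral>\<^sup>+ t. ennreal pi * indicator {0<..<1} t * G t \<partial>lborel)"
    by (subst nn_integral_density) auto
  also have "\<dots> = (\<integral>\<^sup>+ t. ennreal (indicator {0<..<1} t * ((\<alpha> + 1) * ((1 - t) powr \<alpha> * t ^ K))) \<partial>lborel)"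
  proof (rule nn_integral_cong)
    fix t :: real
    show "ennreal pi * indicator {0<..<1} t * G t = ennreal (indicator {0<..<1} t * ((\<alpha> + 1) * ((1 - t) powr \<alpha> * t ^ K)))"
    proof (cases "t \<in> {0<..<1}")
      case True
      have nn: "0 \<le> (\<alpha> + 1) / pi * (1 - t) powr \<alpha> * t ^ K" using a True by simp
      have "ennreal pi * indicator {0<..<1} t * G t = ennreal pi * ennreal ((\<alpha> + 1) / pi * (1 - t) powr \<alpha> * t ^ K)"
        using True by (simp add: G_def)
      also have "\<dots> = ennreal (pi * ((\<alpha> + 1) / pi * (1 - t) powr \<alpha> * t ^ K))"
        by (rule ennreal_mult[symmetric]) (use nn in auto)
      also have "pi * ((\<alpha> + 1) / pi * (1 - t) powr \<alpha> * t ^ K) = indicator {0<..<1} t * ((\<alpha> + 1) * ((1 - t) powr \<alpha> * t ^ K))"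
        using True by simp
      finally show ?thesis .
    qed simp
  qed
  also have "\<dots> = ennreal (fact K * Gamma (\<alpha> + 2) / Gamma (real K + \<alpha> + 2))"
    by (rule nn_integral_has_integral_lebesgue[OF _ beta_has_integral[OF a]]) (use a in auto)
  finally show ?thesis .
qed

definition ee :: "real \<Rightarrow> complex" where "ee s = exp (2 * of_real pi * \<i> * of_real s)"

lemma ee_norm[simp]: "cmod (ee s) = 1"
  unfolding ee_def by (simp add: norm_exp_eq_Re)

lemma ee_nz[simp]: "ee s \<noteq> 0" unfolding ee_def by simp

lemma cnj_ee: "cnj (ee s) = inverse (ee s)"
  unfolding ee_def by (simp add: exp_cnj exp_minus[symmetric])

lemma continuous_ee[continuous_intros]: "continuous_on A ee"
  unfolding ee_def by (intro continuous_intros)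

lemma circle_avg:
  assumes q: "q holomorphic_on ball 0 1" and z: "z \<in> ball (0::complex) 1"
  shows "((\<lambda>s. q (ee s * z) * cnj (ee s * z) ^ m) has_integral
           (of_real ((cmod z) ^ (2 * m)) * ((deriv ^^ m) q 0 / fact m))) {0..1}"
proof (cases "z = 0")
  case True
  show ?thesis
  proof (cases "m = 0")
    case True
    with \<open>z = 0\<close> show ?thesis using has_integral_const_real[of "q 0" 0 1] by simp
  next
    case False
    then have "0 < m" "0 < 2 * m" by simp_all
    with \<open>z = 0\<close> show ?thesis using has_integral_const_real[of "0::complex" 0 1] by (simp add: zero_power)
  qed
next
  case False
  define r where "r = cmod z"
  have r0: "r > 0" using False by (simp add: r_def)
  have r1: "r < 1" using z by (simp add: r_def)
  define c where "c = z / of_real r"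
  have cn: "cmod c = 1" using r0 by (simp add: c_def r_def norm_divide)
  have zc: "z = c * of_real r" using r0 by (simp add: c_def)
  define qc where "qc = (\<lambda>u. q (c * u))"
  have inb: "c * u \<in> ball 0 1" if "u \<in> ball 0 1" for u using that cn by (simp add: norm_mult)
  have hol: "qc holomorphic_on ball 0 1"
    unfolding qc_def
    by (rule holomorphic_on_compose_gen[OF _ q, unfolded o_def]) (auto intro!: holomorphic_intros inb)
  have cballsub: "cball 0 r \<subseteq> ball (0::complex) 1" using r1 by auto
  have contq: "continuous_on (cball 0 r) qc"
    using holomorphic_on_imp_continuous_on[OF hol] cballsub continuous_on_subset by blast
  have holr: "qc holomorphic_on ball 0 r"
    using hol by (rule holomorphic_on_subset) (use r1 in auto)
  have C: "((\<lambda>u. qc u / (u - 0) ^ Suc m) has_contour_integral ((2 * pi * \<i>) / (fact m) * (deriv ^^ m) qc 0)) (circlepath 0 r)"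
    by (rule Cauchy_has_contour_integral_higher_derivative_circlepath[OF contq holr]) (use r0 in simp)
  have dq: "(deriv ^^ m) qc 0 = c ^ m * (deriv ^^ m) q 0"
    unfolding qc_def using higher_deriv_compose_linear[OF q, of "ball 0 1" 0 c m] inb by simp
  define K where "K = cnj c ^ m * of_real (r ^ (2 * m)) / (2 * pi * \<i>)"
  have C2: "((\<lambda>x. qc (circlepath 0 r x) / (circlepath 0 r x) ^ Suc m * vector_derivative (circlepath 0 r) (at x within {0..1}))
           has_integral ((2 * pi * \<i>) / (fact m) * (deriv ^^ m) qc 0)) {0..1}"
    using C by (simp add: has_contour_integral_def)
  have C3: "((\<lambda>x. K * (qc (circlepath 0 r x) / (circlepath 0 r x) ^ Suc m * vector_derivative (circlepath 0 r) (at x within {0..1})))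
           has_integral (K * ((2 * pi * \<i>) / (fact m) * (deriv ^^ m) qc 0))) {0..1}"
    by (rule has_integral_mult_right[OF C2])
  have val: "K * ((2 * pi * \<i>) / (fact m) * (deriv ^^ m) qc 0) = of_real ((cmod z) ^ (2 * m)) * ((deriv ^^ m) q 0 / fact m)"
  proof -
    have cc: "cnj c ^ m * c ^ m = 1"
      using cn by (metis complex_norm_square mult.commute norm_one one_power2 power_mult_distrib power_one complex_mod_mult_cnj of_real_1)
    have "K * ((2 * pi * \<i>) / (fact m) * (deriv ^^ m) qc 0) = (cnj c ^ m * c ^ m) * of_real (r ^ (2 * m)) * ((deriv ^^ m) q 0 / fact m)"
      unfolding K_def dq by (simp add: field_simps)
    also have "\<dots> = of_real ((cmod z) ^ (2 * m)) * ((deriv ^^ m) q 0 / fact m)"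
      using cc by (simp add: r_def)
    finally show ?thesis .
  qed
  have pt: "K * (qc (circlepath 0 r x) / (circlepath 0 r x) ^ Suc m * vector_derivative (circlepath 0 r) (at x within {0..1}))
            = q (ee x * z) * cnj (ee x * z) ^ m" if x: "x \<in> {0..1}" for x
  proof -
    have cp: "circlepath 0 r x = of_real r * ee x" by (simp add: circlepath ee_def)
    have vd: "vector_derivative (circlepath 0 r) (at x within {0..1}) = 2 * pi * \<i> * of_real r * ee x"
      using x by (simp add: vector_derivative_circlepath01 ee_def)
    have q1: "qc (of_real r * ee x) = q (ee x * z)" unfolding qc_def zc by (simp add: algebra_simps)
    have c1: "cnj (ee x * z) ^ m = cnj c ^ m * of_real r ^ m / ee x ^ m"
      by (simp add: zc cnj_ee power_mult_distrib field_simps)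
    show ?thesis
      unfolding cp q1 c1 vd K_def using r0
      by (simp add: field_simps power2_eq_square power_mult power_mult_distrib)
  qed
  show ?thesis
    using C3 unfolding val by (rule has_integral_cong[THEN iffD1, rotated]) (rule pt)
qed

definition cK :: "real \<Rightarrow> nat \<Rightarrow> real" where
  "cK \<alpha> K = fact K * Gamma (\<alpha> + 2) / Gamma (real K + \<alpha> + 2)"

lemma cK_pos: "\<alpha> > -1 \<Longrightarrow> cK \<alpha> K > 0"
  unfolding cK_def by (intro divide_pos_pos mult_pos_pos Gamma_real_pos) auto

lemma cK_0: "\<alpha> > -1 \<Longrightarrow> cK \<alpha> 0 = 1"
proof -
  assume "\<alpha> > -1"
  then have "Gamma (\<alpha> + 2) > 0" by (intro Gamma_real_pos) auto
  then show ?thesis unfolding cK_def by simp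
qed

lemma rad_nn': "\<alpha> > -1 \<Longrightarrow> (\<integral>\<^sup>+ z. ennreal ((cmod z) ^ (2 * K)) \<partial>dA \<alpha>) = ennreal (cK \<alpha> K)"
  using rad_nn unfolding cK_def by blast

lemma dA_UNIV: "\<alpha> > -1 \<Longrightarrow> emeasure (dA \<alpha>) UNIV = 1"
proof -
  assume a: "\<alpha> > -1"
  have "emeasure (dA \<alpha>) UNIV = (\<integral>\<^sup>+ z. ennreal ((cmod z) ^ (2 * 0)) \<partial>dA \<alpha>)"
    using nn_integral_indicator[of UNIV "dA \<alpha>"] by simp
  also have "\<dots> = 1" using rad_nn'[OF a, of 0] cK_0[OF a] by simp
  finally show ?thesis .
qed

lemma dA_finite: "\<alpha> > -1 \<Longrightarrow> finite_measure (dA \<alpha>)"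
  by (rule finite_measureI) (simp add: dA_UNIV)

lemma dA_pair: "\<alpha> > -1 \<Longrightarrow> pair_sigma_finite lborel (dA \<alpha>)"
  unfolding pair_sigma_finite_def
  using dA_finite finite_measure.axioms(1) sigma_finite_lborel by blast

lemma hb_rad: "\<alpha> > -1 \<Longrightarrow> has_bochner_integral (dA \<alpha>) (\<lambda>z. (cmod z) ^ (2 * K)) (cK \<alpha> K)"
  by (rule has_bochner_integral_nn_integral) (auto simp: rad_nn' less_imp_le[OF cK_pos])

lemma integrable_rad: "\<alpha> > -1 \<Longrightarrow> integrable (dA \<alpha>) (\<lambda>z. (cmod z) ^ (2 * K))"
  using hb_rad by (metis has_bochner_integral_iff)

lemma integral_rad: "\<alpha> > -1 \<Longrightarrow> (\<integral> z. (cmod z) ^ (2 * K) \<partial>dA \<alpha>) = cK \<alpha> K"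
  using hb_rad by (metis has_bochner_integral_iff)

lemma integral_rad_c: "\<alpha> > -1 \<Longrightarrow> (\<integral> z. complex_of_real ((cmod z) ^ (2 * K)) \<partial>dA \<alpha>) = of_real (cK \<alpha> K)"
  using integral_rad by (metis integral_complex_of_real)

lemma AE_ball: "AE z in dA \<alpha>. z \<in> ball 0 1"
  unfolding dA_Wt by (subst AE_density) (auto simp: Wt_def indicator_def)

definition q0 :: "(complex \<Rightarrow> complex) \<Rightarrow> complex \<Rightarrow> complex" where
  "q0 q z = (if z \<in> ball 0 1 then q z else 0)"

lemma q0_meas[measurable]:
  assumes "q holomorphic_on ball 0 1"
  shows "q0 q \<in> borel_measurable borel"
proof -
  have c: "continuous_on (ball 0 1) q" using assms holomorphic_on_imp_continuous_on by blast
  have "(\<lambda>x. indicator (ball 0 1) x *\<^sub>R q x) \<in> borel_measurable borel"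
    by (rule borel_measurable_continuous_on_indicator[OF _ c]) simp
  moreover have "(\<lambda>x. indicator (ball 0 1) x *\<^sub>R q x) = q0 q"
    by (auto simp: q0_def indicator_def fun_eq_iff)
  ultimately show ?thesis by simp
qed

lemma cnj_meas[measurable]: "cnj \<in> borel_measurable borel"
  by (intro borel_measurable_continuous_onI continuous_intros)

lemma cmodpow_meas[measurable]: "(\<lambda>x::complex. complex_of_real (cmod x ^ n)) \<in> borel_measurable borel"
  by (intro borel_measurable_continuous_onI continuous_intros)

lemma sets_lborel_dA: "sets (lborel \<Otimes>\<^sub>M dA \<alpha>) = sets (borel :: (real \<times> complex) measure)"
  by (metis borel_prod sets_dA sets_lborel sets_pair_measure_cong)

lemma ee_mult_ball: "(ee s * z \<in> ball 0 1) = (z \<in> ball 0 1)"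
  by (simp add: norm_mult)

lemma core:
  assumes a: "\<alpha> > -1" and q: "q holomorphic_on ball 0 1"
    and int: "integrable (dA \<alpha>) (\<lambda>z. q0 q z * cnj z ^ m * of_real ((cmod z) ^ (2 * k)))"
  shows "(\<integral> z. q0 q z * cnj z ^ m * of_real ((cmod z) ^ (2 * k)) \<partial>dA \<alpha>)
           = (deriv ^^ m) q 0 / fact m * of_real (cK \<alpha> (m + k))"
proof -
  define F where "F z = q0 q z * cnj z ^ m * of_real ((cmod z) ^ (2 * k))" for z
  define c where "c = (deriv ^^ m) q 0 / fact m"
  interpret P: pair_sigma_finite lborel "dA \<alpha>" by (rule dA_pair[OF a])
  have mF[measurable]: "F \<in> borel_measurable borel" unfolding F_def using q0_meas[OF q] by measurable
  have intF: "integrable (dA \<alpha>) F" using int unfolding F_def .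
  define H where "H s z = indicator {0..1::real} s *\<^sub>R F (ee s * z)" for s z
  have mg: "(\<lambda>w::real \<times> complex. ee (fst w) * snd w) \<in> borel_measurable borel"
    unfolding ee_def by (intro borel_measurable_continuous_onI continuous_intros)
  have mFg: "(\<lambda>w::real \<times> complex. F (ee (fst w) * snd w)) \<in> borel_measurable borel"
    using measurable_compose[OF mg mF] by simp
  have mH0: "(\<lambda>w::real \<times> complex. indicator {0..1::real} (fst w) *\<^sub>R F (ee (fst w) * snd w)) \<in> borel_measurable borel"
  proof -
    have mfst: "(fst :: real \<times> complex \<Rightarrow> real) \<in> borel_measurable borel"
      by (intro borel_measurable_continuous_onI continuous_intros)
    have mi: "(indicator {0..1::real} :: real \<Rightarrow> real) \<in> borel_measurable borel"
      by (rule borel_measurable_indicator) simp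
    have m1: "(\<lambda>w::real\<times>complex. indicator {0..1::real} (fst w) :: real) \<in> borel_measurable borel"
      using measurable_compose[OF mfst mi] by (simp add: o_def)
    show ?thesis by (rule borel_measurable_scaleR[OF m1 mFg])
  qed
  have mH: "case_prod H \<in> borel_measurable (lborel \<Otimes>\<^sub>M dA \<alpha>)"
  proof -
    have "case_prod H = (\<lambda>w::real \<times> complex. indicator {0..1::real} (fst w) *\<^sub>R F (ee (fst w) * snd w))"
      by (auto simp: H_def fun_eq_iff)
    then show ?thesis by (subst measurable_cong_sets[OF sets_lborel_dA refl]) (use mH0 in simp)
  qed
  have rotI: "integrable (dA \<alpha>) (\<lambda>z. F (ee s * z))" for s
    using integral_dA_rot(2)[OF mF ee_norm] intF by simp
  have mnF: "(\<lambda>z. norm (F z)) \<in> borel_measurable borel" by measurable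
  have rotN: "(\<integral> z. norm (F (ee s * z)) \<partial>dA \<alpha>) = (\<integral> z. norm (F z) \<partial>dA \<alpha>)" for s
    using integral_dA_rot(1)[OF mnF ee_norm] by simp
  have rotF: "(\<integral> z. F (ee s * z) \<partial>dA \<alpha>) = (\<integral> z. F z \<partial>dA \<alpha>)" for s
    using integral_dA_rot(1)[OF mF ee_norm] by simp
  have intH: "integrable (lborel \<Otimes>\<^sub>M dA \<alpha>) (case_prod H)"
  proof (rule P.Fubini_integrable[OF mH])
    have eq: "(\<integral> z. norm (case_prod H (s, z)) \<partial>dA \<alpha>) = indicator {0..1} s * (\<integral> z. norm (F z) \<partial>dA \<alpha>)" for s
      by (simp add: H_def rotN)
    show "integrable lborel (\<lambda>s. \<integral> z. norm (case_prod H (s, z)) \<partial>dA \<alpha>)"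
      unfolding eq by (intro integrable_mult_left integrable_real_indicator) auto
    show "AE s in lborel. integrable (dA \<alpha>) (\<lambda>z. case_prod H (s, z))"
      using rotI by (simp add: H_def)
  qed
  have fub: "(\<integral> z. (\<integral> s. H s z \<partial>lborel) \<partial>dA \<alpha>) = (\<integral> s. (\<integral> z. H s z \<partial>dA \<alpha>) \<partial>lborel)"
    by (rule P.Fubini_integral) (use intH in simp)
  have rhs: "(\<integral> s. (\<integral> z. H s z \<partial>dA \<alpha>) \<partial>lborel) = (\<integral> z. F z \<partial>dA \<alpha>)"
  proof -
    have "(\<integral> s. (\<integral> z. H s z \<partial>dA \<alpha>) \<partial>lborel) = (\<integral> s. indicator {0..1::real} s *\<^sub>R (\<integral> z. F z \<partial>dA \<alpha>) \<partial>lborel)"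
      by (simp add: H_def rotF)
    also have "\<dots> = (\<integral> s. indicator {0..1::real} s \<partial>lborel) *\<^sub>R (\<integral> z. F z \<partial>dA \<alpha>)"
      by (rule integral_scaleR_left) auto
    also have "\<dots> = (\<integral> z. F z \<partial>dA \<alpha>)" by simp
    finally show ?thesis .
  qed
  have inner: "(\<integral> s. H s z \<partial>lborel) = c * of_real (if z \<in> ball 0 1 then (cmod z) ^ (2 * (m + k)) else 0)" for z
  proof (cases "z \<in> ball 0 1")
    case True
    define g where "g s = of_real ((cmod z) ^ (2 * k)) * (q (ee s * z) * cnj (ee s * z) ^ m)" for s
    have Hg: "H s z = indicator {0..1::real} s *\<^sub>R g s" for s
      using True by (simp add: H_def F_def g_def q0_def ee_mult_ball norm_mult)
    have cq: "continuous_on (ball 0 1) q" using q holomorphic_on_imp_continuous_on by blast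
    have cg: "continuous_on {0..1} g"
    proof -
      have "continuous_on {0..1} (\<lambda>s. q (ee s * z))"
        by (rule continuous_on_compose2[OF cq]) (use True in \<open>auto intro!: continuous_intros simp: norm_mult\<close>)
      then show ?thesis unfolding g_def by (intro continuous_intros)
    qed
    have si: "set_integrable lborel {0..1} g"
      unfolding set_integrable_def by (rule borel_integrable_compact[OF _ cg]) simp
    have hi: "(g has_integral (of_real ((cmod z) ^ (2 * k)) * (of_real ((cmod z) ^ (2 * m)) * c))) {0..1}"
      unfolding g_def c_def by (rule has_integral_mult_right[OF circle_avg[OF q True]])
    have "(\<integral> s. H s z \<partial>lborel) = (LINT s:{0..1}|lborel. g s)"
      by (simp add: Hg set_lebesgue_integral_def)
    also have "\<dots> = integral {0..1} g" by (rule set_borel_integral_eq_integral(2)[OF si])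
    also have "\<dots> = of_real ((cmod z) ^ (2 * k)) * (of_real ((cmod z) ^ (2 * m)) * c)"
      by (rule integral_unique[OF hi])
    also have "\<dots> = c * of_real (if z \<in> ball 0 1 then (cmod z) ^ (2 * (m + k)) else 0)"
      using True by (simp add: power_add algebra_simps)
    finally show ?thesis .
  next
    case False
    then have "H s z = 0" for s by (simp add: H_def F_def q0_def norm_mult)
    then show ?thesis using False by simp
  qed
  have lhs: "(\<integral> z. (\<integral> s. H s z \<partial>lborel) \<partial>dA \<alpha>) = c * of_real (cK \<alpha> (m + k))"
  proof -
    have pb[measurable]: "Measurable.pred borel (\<lambda>x::complex. x \<in> ball 0 1)"
      by (simp add: pred_def)
    have "(\<integral> z. (\<integral> s. H s z \<partial>lborel) \<partial>dA \<alpha>) = (\<integral> z. c * of_real (if z \<in> ball 0 1 then (cmod z) ^ (2 * (m + k)) else 0) \<partial>dA \<alpha>)"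
      by (simp add: inner)
    also have "\<dots> = (\<integral> z. c * of_real ((cmod z) ^ (2 * (m + k))) \<partial>dA \<alpha>)"
    proof (rule integral_cong_AE)
      show "AE z in dA \<alpha>. c * of_real (if z \<in> ball 0 1 then (cmod z) ^ (2 * (m + k)) else 0) = c * of_real ((cmod z) ^ (2 * (m + k)))"
        using AE_ball[of \<alpha>] by eventually_elim simp
    qed measurable
    also have "\<dots> = c * of_real (cK \<alpha> (m + k))"
      using integral_rad_c[OF a, of "m + k"] by simp
    finally show ?thesis .
  qed
  show ?thesis using fub rhs lhs unfolding F_def c_def by simp
qed

lemma cmod_diff_sq: "(cmod (u - of_real s * v))\<^sup>2 = (cmod u)\<^sup>2 - s * ((cmod u)\<^sup>2 + (cmod v)\<^sup>2 - (cmod (u - v))\<^sup>2) + s\<^sup>2 * (cmod v)\<^sup>2"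
  unfolding cmod_power2 by (simp add: power2_eq_square algebra_simps)

lemma ellipse_fill:
  fixes a b d w :: complex
  assumes d: "d \<noteq> 0" and w: "cmod (w - a) + cmod (w - b) \<le> sqrt ((cmod (a - b))\<^sup>2 + (cmod d)\<^sup>2)"
  shows "\<exists>x Y. (cmod x)\<^sup>2 + (cmod Y)\<^sup>2 = 1 \<and> w = of_real ((cmod x)\<^sup>2) * a + of_real ((cmod Y)\<^sup>2) * b + x * cnj Y * d"
proof -
  define u where "u = w - b"
  define v where "v = a - b"
  define D where "D = cmod d"
  define A where "A = (cmod v)\<^sup>2 + D\<^sup>2"
  define L where "L = sqrt A"
  define r1 where "r1 = cmod u"
  define r2 where "r2 = cmod (u - v)"
  define B where "B = r1\<^sup>2 - r2\<^sup>2 + A"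
  define g where "g s = (cmod (u - of_real s * v))\<^sup>2 - D\<^sup>2 * s * (1 - s)" for s :: real
  have D0: "D > 0" using d by (simp add: D_def)
  have A0: "A > 0" unfolding A_def using D0 by (simp add: add_nonneg_pos)
  have LA: "L\<^sup>2 = A" unfolding L_def by (rule real_sqrt_pow2) (use A0 in linarith)
  have L0: "L \<ge> 0" unfolding L_def using A0 by simp
  have r10: "r1 \<ge> 0" and r20: "r2 \<ge> 0" by (simp_all add: r1_def r2_def)
  have wa: "r2 = cmod (w - a)" by (simp add: r2_def u_def v_def)
  have tri: "r1 + r2 \<le> L" using w by (simp add: wa r1_def u_def L_def A_def D_def v_def)
  have gform: "g s = A * s\<^sup>2 - B * s + r1\<^sup>2" for s
    unfolding g_def cmod_diff_sq A_def B_def r1_def r2_def by (simp add: algebra_simps power2_eq_square)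
  have B1: "B \<ge> 2 * L * r1"
  proof -
    have "B - 2 * L * r1 = (L - r1)\<^sup>2 - r2\<^sup>2" unfolding B_def using LA by (simp add: power2_eq_square algebra_simps)
    moreover have "r2\<^sup>2 \<le> (L - r1)\<^sup>2" using tri r20 by (intro power_mono) auto
    ultimately show ?thesis by simp
  qed
  have B2: "2 * A - B \<ge> 2 * L * r2"
  proof -
    have "2 * A - B - 2 * L * r2 = (L - r2)\<^sup>2 - r1\<^sup>2" unfolding B_def using LA by (simp add: power2_eq_square algebra_simps)
    moreover have "r1\<^sup>2 \<le> (L - r2)\<^sup>2" using tri r10 by (intro power_mono) auto
    ultimately show ?thesis by simp
  qed
  define s0 where "s0 = B / (2 * A)"
  have s00: "s0 \<ge> 0" unfolding s0_def using B1 L0 r10 A0 by (intro divide_nonneg_pos) (auto intro: order_trans[rotated])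
  have s01: "s0 \<le> 1" unfolding s0_def using B2 L0 r20 A0 by (simp add: divide_le_eq) (smt (verit) mult_nonneg_nonneg)
  have gs0: "g s0 \<le> 0"
  proof -
    have "g s0 = r1\<^sup>2 - B\<^sup>2 / (4 * A)" unfolding gform s0_def using A0 by (simp add: field_simps power2_eq_square)
    moreover have "4 * A * r1\<^sup>2 \<le> B\<^sup>2"
    proof -
      have "(2 * L * r1)\<^sup>2 \<le> B\<^sup>2" using B1 L0 r10 by (intro power_mono) auto
      then show ?thesis using LA by (simp add: power_mult_distrib)
    qed
    then have "r1\<^sup>2 \<le> B\<^sup>2 / (4 * A)" using A0 by (simp add: pos_le_divide_eq mult.commute)
    ultimately show ?thesis by linarith
  qed
  have g0: "g 0 \<ge> 0" by (simp add: g_def)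
  have cg: "continuous_on {0..s0} g" unfolding g_def by (intro continuous_intros)
  obtain s where s: "0 \<le> s" "s \<le> s0" "g s = 0"
    using IVT2'[of g s0 0 0, OF gs0 g0 s00 cg] by blast
  have s1: "s \<le> 1" using s s01 by simp
  have key: "(cmod (u - of_real s * v))\<^sup>2 = D\<^sup>2 * s * (1 - s)" using s(3) by (simp add: g_def)
  show ?thesis
  proof (cases "s = 0")
    case True
    then have "u = 0" using key by simp
    then have "w = b" by (simp add: u_def)
    then show ?thesis by (intro exI[of _ 0] exI[of _ 1]) simp
  next
    case False
    with s have sp: "s > 0" by simp
    define x where "x = complex_of_real (sqrt s)"
    define Z where "Z = (u - of_real s * v) / (d * of_real (sqrt s))"
    define Y where "Y = cnj Z"
    have x2: "(cmod x)\<^sup>2 = s" using sp by (simp add: x_def)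
    have Y2: "(cmod Y)\<^sup>2 = 1 - s"
    proof -
      have "(cmod Y)\<^sup>2 = (cmod Z)\<^sup>2" by (simp add: Y_def)
      also have "\<dots> = (cmod (u - of_real s * v))\<^sup>2 / (D\<^sup>2 * s)"
        unfolding Z_def using sp by (simp add: norm_divide norm_mult D_def power_divide power_mult_distrib)
      also have "\<dots> = 1 - s" using key D0 sp by simp
      finally show ?thesis .
    qed
    have xYd: "x * cnj Y * d = u - of_real s * v"
      using sp d by (simp add: x_def Y_def Z_def field_simps)
    have n: "(cmod x)\<^sup>2 + (cmod Y)\<^sup>2 = 1" using x2 Y2 by simp
    have e: "w = of_real ((cmod x)\<^sup>2) * a + of_real ((cmod Y)\<^sup>2) * b + x * cnj Y * d"
      unfolding x2 Y2 xYd by (simp add: u_def v_def algebra_simps)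
    show ?thesis using n e by blast
  qed
qed

lemma q0_bound_int:
  fixes P :: "complex \<Rightarrow> complex"
  assumes intP: "integrable (dA \<alpha>) P" and P0: "\<And>z. z \<notin> ball 0 1 \<Longrightarrow> P z = 0"
    and mg: "g \<in> borel_measurable borel" and gb: "\<And>z. z \<in> ball 0 1 \<Longrightarrow> cmod (g z) \<le> 1"
  shows "integrable (dA \<alpha>) (\<lambda>z. P z * g z)"
proof (rule Bochner_Integration.integrable_bound[OF intP])
  show "(\<lambda>z. P z * g z) \<in> borel_measurable (dA \<alpha>)"
  proof -
    have "P \<in> borel_measurable borel"
      using borel_measurable_integrable[OF intP] by (subst (asm) measurable_cong_sets[OF sets_dA refl])
    then have "(\<lambda>z. P z * g z) \<in> borel_measurable borel" using mg by measurable
    then show ?thesis by (subst measurable_cong_sets[OF sets_dA refl])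
  qed
  show "AE z in dA \<alpha>. norm (P z * g z) \<le> norm (P z)"
  proof (rule AE_I2)
    fix z
    show "norm (P z * g z) \<le> norm (P z)"
    proof (cases "z \<in> ball 0 1")
      case True
      then show ?thesis using gb[OF True] by (simp add: norm_mult mult_left_le)
    next
      case False then show ?thesis using P0 by simp
    qed
  qed
qed

lemma q0_zero: "z \<notin> ball 0 1 \<Longrightarrow> q0 q z = 0"
  by (simp add: q0_def)

lemma q0_const_int:
  assumes a: "\<alpha> > -1"
  shows "integrable (dA \<alpha>) (q0 (\<lambda>_. c))"
proof -
  interpret finite_measure "dA \<alpha>" by (rule dA_finite[OF a])
  have "integrable (dA \<alpha>) (\<lambda>_. c)" by simp
  moreover have "q0 (\<lambda>_. c) \<in> borel_measurable (dA \<alpha>)"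
    using q0_meas[of "\<lambda>_. c"] by (subst measurable_cong_sets[OF sets_dA refl]) simp
  ultimately show ?thesis
    by (rule Bochner_Integration.integrable_bound) (auto simp: q0_def)
qed

lemma pow_meas[measurable]: "(\<lambda>z::complex. z ^ N) \<in> borel_measurable borel"
  by (intro borel_measurable_continuous_onI continuous_intros)

lemma cnjpow_meas[measurable]: "(\<lambda>z::complex. cnj z ^ N) \<in> borel_measurable borel"
  by (intro borel_measurable_continuous_onI continuous_intros)

lemma integral_lin4:
  fixes g1 g2 g3 g4 :: "complex \<Rightarrow> complex"
  assumes "integrable M g1" "integrable M g2" "integrable M g3" "integrable M g4"
  shows "(\<integral> z. c1 * g1 z + c2 * g2 z + c3 * g3 z + c4 * g4 z \<partial>M)
     = c1 * integral\<^sup>L M g1 + c2 * integral\<^sup>L M g2 + c3 * integral\<^sup>L M g3 + c4 * integral\<^sup>L M g4"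
proof -
  have i12: "integrable M (\<lambda>z. c1 * g1 z + c2 * g2 z)" by (intro Bochner_Integration.integrable_add Bochner_Integration.integrable_mult_right assms)
  have i123: "integrable M (\<lambda>z. c1 * g1 z + c2 * g2 z + c3 * g3 z)" by (intro Bochner_Integration.integrable_add Bochner_Integration.integrable_mult_right assms)
  have "(\<integral> z. c1 * g1 z + c2 * g2 z + c3 * g3 z + c4 * g4 z \<partial>M) = (\<integral> z. c1 * g1 z + c2 * g2 z + c3 * g3 z \<partial>M) + (\<integral> z. c4 * g4 z \<partial>M)"
    by (rule Bochner_Integration.integral_add[OF i123]) (intro Bochner_Integration.integrable_mult_right assms)
  also have "(\<integral> z. c1 * g1 z + c2 * g2 z + c3 * g3 z \<partial>M) = (\<integral> z. c1 * g1 z + c2 * g2 z \<partial>M) + (\<integral> z. c3 * g3 z \<partial>M)"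
    by (rule Bochner_Integration.integral_add[OF i12]) (intro Bochner_Integration.integrable_mult_right assms)
  also have "(\<integral> z. c1 * g1 z + c2 * g2 z \<partial>M) = (\<integral> z. c1 * g1 z \<partial>M) + (\<integral> z. c2 * g2 z \<partial>M)"
    by (rule Bochner_Integration.integral_add) (intro Bochner_Integration.integrable_mult_right assms)+
  finally show ?thesis by simp
qed

lemma core_m:
  assumes a: "\<alpha> > -1" and q: "q holomorphic_on ball 0 1"
    and int: "integrable (dA \<alpha>) (\<lambda>z. q0 q z * cnj z ^ m)"
  shows "(\<integral> z. q0 q z * cnj z ^ m \<partial>dA \<alpha>) = (deriv ^^ m) q 0 / fact m * of_real (cK \<alpha> m)"
  using core[OF a q, of m 0] int by simp

lemma core_k:
  assumes a: "\<alpha> > -1" and q: "q holomorphic_on ball 0 1"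
    and int: "integrable (dA \<alpha>) (\<lambda>z. q0 q z * of_real ((cmod z) ^ (2 * k)))"
  shows "(\<integral> z. q0 q z * of_real ((cmod z) ^ (2 * k)) \<partial>dA \<alpha>) = q 0 * of_real (cK \<alpha> k)"
  using core[OF a q, of 0 k] int by simp

lemma core_0:
  assumes a: "\<alpha> > -1" and q: "q holomorphic_on ball 0 1"
    and int: "integrable (dA \<alpha>) (q0 q)"
  shows "(\<integral> z. q0 q z \<partial>dA \<alpha>) = q 0"
  using core[OF a q, of 0 0] int cK_0[OF a] by simp

lemma lam_pow:
  assumes n: "n > 0"
  shows "exp (2 * pi * \<i> / of_nat n) ^ (n * p + j) = exp (2 * pi * \<i> * of_nat j / of_nat n)"
proof -
  define lam where "lam = exp (2 * pi * \<i> / of_nat n)"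
  have "lam ^ n = exp (of_nat n * (2 * pi * \<i> / of_nat n))"
    unfolding lam_def by (rule exp_of_nat_mult[symmetric])
  also have "of_nat n * (2 * pi * \<i> / of_nat n) = 2 * of_real pi * \<i>" using n by simp
  finally have ln: "lam ^ n = 1" by simp
  have "lam ^ (n * p + j) = (lam ^ n) ^ p * lam ^ j" by (simp add: power_add power_mult)
  also have "\<dots> = lam ^ j" using ln by simp
  also have "\<dots> = exp (of_nat j * (2 * pi * \<i> / of_nat n))"
    unfolding lam_def by (rule exp_of_nat_mult[symmetric])
  also have "of_nat j * (2 * pi * \<i> / of_nat n) = 2 * pi * \<i> * of_nat j / of_nat n" by simp
  finally show ?thesis unfolding lam_def .
qed

lemma norm_sq_mult_cnj: "complex_of_real ((cmod z)\<^sup>2) = z * cnj z"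
  by (rule complex_norm_square)

lemma pow_cnj_pow: "z ^ N * cnj z ^ N = complex_of_real ((cmod z) ^ (2 * N))"
proof -
  have "complex_of_real ((cmod z) ^ (2 * N)) = complex_of_real ((cmod (z ^ N))\<^sup>2)"
    by (simp add: norm_power power_mult[symmetric] mult.commute)
  also have "\<dots> = z ^ N * cnj (z ^ N)" by (rule complex_norm_square)
  finally show ?thesis by simp
qed

lemma one_bergman:
  assumes a: "\<alpha> > -1"
  shows "(\<lambda>_. 1::complex) \<in> bergman \<alpha>"
  unfolding bergman_def
proof (intro CollectI conjI)
  show "(\<lambda>_. 1::complex) holomorphic_on ball 0 1" by simp
  have "(\<integral>\<^sup>+ z. ennreal ((cmod (1::complex))\<^sup>2) \<partial>dA \<alpha>) = emeasure (dA \<alpha>) UNIV"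
    using nn_integral_indicator[of UNIV "dA \<alpha>"] by simp
  then show "(\<integral>\<^sup>+ z. ennreal ((cmod (1::complex))\<^sup>2) \<partial>dA \<alpha>) < \<infinity>" using dA_UNIV[OF a] by simp
qed

lemma q0_integrable_L2:
  assumes a: "\<alpha> > -1" and q: "q holomorphic_on ball 0 1"
    and fin: "(\<integral>\<^sup>+ z. ennreal ((cmod (q z))\<^sup>2) \<partial>dA \<alpha>) < \<infinity>"
  shows "integrable (dA \<alpha>) (q0 q)"
proof (rule integrableI_bounded)
  have m[measurable]: "q0 q \<in> borel_measurable borel" by (rule q0_meas[OF q])
  show "q0 q \<in> borel_measurable (dA \<alpha>)" using m by (subst measurable_cong_sets[OF sets_dA refl])
  have m2: "(\<lambda>z. ennreal ((cmod (q0 q z))\<^sup>2)) \<in> borel_measurable (dA \<alpha>)"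
    using m by (subst measurable_cong_sets[OF sets_dA refl]) measurable
  have le1: "ennreal (norm (q0 q z)) \<le> 1 + ennreal ((cmod (q0 q z))\<^sup>2)" for z
  proof -
    have "norm (q0 q z) \<le> 1 + (cmod (q0 q z))\<^sup>2"
    proof (cases "norm (q0 q z) \<le> 1")
      case True then show ?thesis by (smt (verit) zero_le_power2)
    next
      case False
      then have "norm (q0 q z) * 1 \<le> norm (q0 q z) * norm (q0 q z)"
        by (intro mult_left_mono) auto
      then have "norm (q0 q z) \<le> (cmod (q0 q z))\<^sup>2" by (simp add: power2_eq_square)
      then show ?thesis by simp
    qed
    then have "ennreal (norm (q0 q z)) \<le> ennreal (1 + (cmod (q0 q z))\<^sup>2)" by (rule ennreal_leI)
    also have "\<dots> = 1 + ennreal ((cmod (q0 q z))\<^sup>2)" by (simp add: ennreal_plus)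
    finally show ?thesis .
  qed
  have "(\<integral>\<^sup>+ z. ennreal (norm (q0 q z)) \<partial>dA \<alpha>) \<le> (\<integral>\<^sup>+ z. 1 + ennreal ((cmod (q0 q z))\<^sup>2) \<partial>dA \<alpha>)"
    by (rule nn_integral_mono) (rule le1)
  also have "\<dots> = (\<integral>\<^sup>+ z. 1 \<partial>dA \<alpha>) + (\<integral>\<^sup>+ z. ennreal ((cmod (q0 q z))\<^sup>2) \<partial>dA \<alpha>)"
    by (rule nn_integral_add) (use m2 in auto)
  also have "(\<integral>\<^sup>+ z. 1 \<partial>dA \<alpha>) = 1"
    using nn_integral_indicator[of UNIV "dA \<alpha>"] dA_UNIV[OF a] by simp
  also have "(\<integral>\<^sup>+ z. ennreal ((cmod (q0 q z))\<^sup>2) \<partial>dA \<alpha>) \<le> (\<integral>\<^sup>+ z. ennreal ((cmod (q z))\<^sup>2) \<partial>dA \<alpha>)"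
    by (rule nn_integral_mono) (simp add: q0_def)
  finally show "(\<integral>\<^sup>+ z. ennreal (norm (q0 q z)) \<partial>dA \<alpha>) < \<infinity>"
    using fin by (simp add: ennreal_add_less_top order_le_less_trans add_left_mono)
qed

theorem theorem5p5:
  fixes \<alpha> :: real and n p j :: nat and \<psi> :: "complex \<Rightarrow> complex"
  assumes "\<alpha> > -1" and "n > 0"
    and "\<psi> holomorphic_on ball 0 1"
    and "bounded_on_bergman \<alpha> (wcomp \<psi> (\<lambda>z. exp (2 * pi * \<i> / of_nat n) * z))"
    and "0 < j" and "j < n"
    and "taylor_coeff \<psi> (n * p + j) \<noteq> 0"
  shows "let lam = exp (2 * pi * \<i> / of_nat n);
             N = n * p + j;
             c = fact N * Gamma (\<alpha> + 2) / Gamma (real N + \<alpha> + 2);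
             a = taylor_coeff \<psi> 0;
             b = lam ^ N * taylor_coeff \<psi> 0;
             L = sqrt ((cmod a)\<^sup>2 * (cmod (1 - exp (2 * pi * \<i> * of_nat j / of_nat n)))\<^sup>2
                       + c * (cmod (taylor_coeff \<psi> N))\<^sup>2)
         in ellipse_region a b L \<subseteq> num_range \<alpha> (wcomp \<psi> (\<lambda>z. lam * z))
            \<and> ellipse_minor_axis a b L = sqrt c * cmod (taylor_coeff \<psi> N)"
proof -
  note a = assms(1) and hol = assms(3)
  define lam where "lam = exp (2 * pi * \<i> / of_nat n)"
  define N where "N = n * p + j"
  define c where "c = fact N * Gamma (\<alpha> + 2) / Gamma (real N + \<alpha> + 2)"
  define a0 where "a0 = taylor_coeff \<psi> 0"
  define b where "b = lam ^ N * taylor_coeff \<psi> 0"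
  define L where "L = sqrt ((cmod a0)\<^sup>2 * (cmod (1 - exp (2 * pi * \<i> * of_nat j / of_nat n)))\<^sup>2
                       + c * (cmod (taylor_coeff \<psi> N))\<^sup>2)"
  define tN where "tN = taylor_coeff \<psi> N"
  define d where "d = tN * of_real (sqrt c)"
  have cc: "c = cK \<alpha> N" by (simp add: c_def cK_def)
  have cpos: "c > 0" using cK_pos[OF a] cc by simp
  have Npos: "N > 0" using assms(5) by (simp add: N_def)
  have tN0: "tN \<noteq> 0" using assms(7) by (simp add: tN_def N_def)
  have d0: "d \<noteq> 0" using tN0 cpos by (simp add: d_def)
  have a0v: "a0 = \<psi> 0" by (simp add: a0_def taylor_coeff_def)
  have lamN: "lam ^ N = exp (2 * pi * \<i> * of_nat j / of_nat n)"
    unfolding lam_def N_def by (rule lam_pow[OF assms(2)])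
  have lamn: "cmod lam = 1" unfolding lam_def by (simp add: norm_exp_eq_Re)
  have bv: "b = lam ^ N * a0" by (simp add: b_def a0_def)
  have abd: "(cmod (a0 - b))\<^sup>2 = (cmod a0)\<^sup>2 * (cmod (1 - exp (2 * pi * \<i> * of_nat j / of_nat n)))\<^sup>2"
  proof -
    have "a0 - b = a0 * (1 - lam ^ N)" by (simp add: bv algebra_simps)
    then show ?thesis by (simp add: lamN norm_mult power_mult_distrib)
  qed
  have dsq: "(cmod d)\<^sup>2 = c * (cmod tN)\<^sup>2"
    using cpos by (simp add: d_def norm_mult power_mult_distrib)
  have Lsq: "L = sqrt ((cmod (a0 - b))\<^sup>2 + (cmod d)\<^sup>2)"
    by (simp add: L_def abd dsq tN_def)
  have minor: "ellipse_minor_axis a0 b L = sqrt c * cmod tN"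
  proof -
    have "L\<^sup>2 = (cmod (a0 - b))\<^sup>2 + (cmod d)\<^sup>2" unfolding Lsq by (rule real_sqrt_pow2) simp
    then have "L\<^sup>2 - (cmod (a0 - b))\<^sup>2 = (cmod d)\<^sup>2" by simp
    then show ?thesis using cpos by (simp add: ellipse_minor_axis_def d_def norm_mult)
  qed
  have psiB: "\<psi> \<in> bergman \<alpha>"
  proof -
    have "wcomp \<psi> (\<lambda>z. exp (2 * pi * \<i> / of_nat n) * z) (\<lambda>_. 1) \<in> bergman \<alpha>"
      using assms(4) one_bergman[OF a] unfolding bounded_on_bergman_def by blast
    moreover have "wcomp \<psi> (\<lambda>z. exp (2 * pi * \<i> / of_nat n) * z) (\<lambda>_. 1) = \<psi>"
      by (simp add: wcomp_def)
    ultimately show ?thesis by simp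
  qed
  then have psiL2: "(\<integral>\<^sup>+ z. ennreal ((cmod (\<psi> z))\<^sup>2) \<partial>dA \<alpha>) < \<infinity>"
    by (simp add: bergman_def)
  define P where "P = q0 \<psi>"
  have intP: "integrable (dA \<alpha>) P" unfolding P_def by (rule q0_integrable_L2[OF a hol psiL2])
  have P0: "P z = 0" if "z \<notin> ball 0 1" for z using that by (simp add: P_def q0_def)
  define E where "E = q0 (\<lambda>_. 1::complex)"
  have intE: "integrable (dA \<alpha>) E" unfolding E_def by (rule q0_const_int[OF a])
  have E0: "E z = 0" if "z \<notin> ball 0 1" for z using that by (simp add: E_def q0_def)
  have bnd0: "cmod (z ^ N) \<le> 1" "cmod (cnj z ^ N) \<le> 1"
    if "z \<in> ball 0 1" for z
    using that by (simp_all add: norm_power power_le_one)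
  have bnd3: "cmod (complex_of_real ((cmod z) ^ (2 * N))) \<le> 1" if "z \<in> ball 0 1" for z
  proof -
    have "cmod (complex_of_real ((cmod z) ^ (2 * N))) = (cmod z) ^ (2 * N)"
      by (subst norm_of_real) simp
    also have "\<dots> \<le> 1" using that by (intro power_le_one) auto
    finally show ?thesis .
  qed
  note bnd1 = bnd0 bnd3
  have iP1: "integrable (dA \<alpha>) (\<lambda>z. P z * cnj z ^ N)"
    by (rule q0_bound_int[OF intP P0 cnjpow_meas bnd0(2)])
  have iP2: "integrable (dA \<alpha>) (\<lambda>z. P z * z ^ N)"
    by (rule q0_bound_int[OF intP P0 pow_meas bnd0(1)])
  have iP3: "integrable (dA \<alpha>) (\<lambda>z. P z * complex_of_real ((cmod z) ^ (2 * N)))"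
    by (rule q0_bound_int[OF intP P0 cmodpow_meas bnd3])
  have iE1: "integrable (dA \<alpha>) (\<lambda>z. E z * cnj z ^ N)"
    by (rule q0_bound_int[OF intE E0 cnjpow_meas bnd0(2)])
  have iE2: "integrable (dA \<alpha>) (\<lambda>z. E z * z ^ N)"
    by (rule q0_bound_int[OF intE E0 pow_meas bnd0(1)])
  have iE3: "integrable (dA \<alpha>) (\<lambda>z. E z * complex_of_real ((cmod z) ^ (2 * N)))"
    by (rule q0_bound_int[OF intE E0 cmodpow_meas bnd3])
  have vP0: "(\<integral> z. P z \<partial>dA \<alpha>) = a0"
    unfolding P_def a0v by (rule core_0[OF a hol]) (use intP in \<open>simp add: P_def\<close>)
  have vP1: "(\<integral> z. P z * cnj z ^ N \<partial>dA \<alpha>) = tN * of_real c"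
    unfolding P_def using core_m[OF a hol, of N] iP1 by (simp add: P_def tN_def taylor_coeff_def cc)
  have vP2: "(\<integral> z. P z * z ^ N \<partial>dA \<alpha>) = 0"
  proof -
    have h: "(\<lambda>z. \<psi> z * z ^ N) holomorphic_on ball 0 1" by (intro holomorphic_intros hol)
    have eq: "q0 (\<lambda>z. \<psi> z * z ^ N) = (\<lambda>z. P z * z ^ N)" by (auto simp: P_def q0_def fun_eq_iff)
    have "(\<integral> z. q0 (\<lambda>z. \<psi> z * z ^ N) z \<partial>dA \<alpha>) = \<psi> 0 * 0 ^ N"
      by (rule core_0[OF a h]) (simp add: eq iP2)
    then show ?thesis using Npos by (simp add: eq)
  qed
  have vP3: "(\<integral> z. P z * complex_of_real ((cmod z) ^ (2 * N)) \<partial>dA \<alpha>) = a0 * of_real c"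
    unfolding P_def using core_k[OF a hol, of N] iP3 by (simp add: P_def a0v cc)
  have hol1: "(\<lambda>_. 1::complex) holomorphic_on ball 0 1" by simp
  have vE0: "(\<integral> z. E z \<partial>dA \<alpha>) = 1"
    unfolding E_def by (rule core_0[OF a hol1]) (use intE in \<open>simp add: E_def\<close>)
  have vE2: "(\<integral> z. E z * z ^ N \<partial>dA \<alpha>) = 0"
  proof -
    have h: "(\<lambda>z::complex. z ^ N) holomorphic_on ball 0 1" by (intro holomorphic_intros)
    have eq: "q0 (\<lambda>z. z ^ N) = (\<lambda>z. E z * z ^ N)" by (auto simp: E_def q0_def fun_eq_iff)
    have "(\<integral> z. q0 (\<lambda>z. z ^ N) z \<partial>dA \<alpha>) = 0 ^ N"
      by (rule core_0[OF a h]) (simp add: eq iE2)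
    then show ?thesis using Npos by (simp add: eq)
  qed
  have vE1: "(\<integral> z. E z * cnj z ^ N \<partial>dA \<alpha>) = 0"
  proof -
    have "(\<integral> z. E z * cnj z ^ N \<partial>dA \<alpha>) = (\<integral> z. cnj (E z * z ^ N) \<partial>dA \<alpha>)"
      by (rule Bochner_Integration.integral_cong) (auto simp: E_def q0_def)
    also have "\<dots> = cnj (\<integral> z. E z * z ^ N \<partial>dA \<alpha>)" by (rule Bochner_Integration.integral_cnj)
    finally show ?thesis using vE2 by simp
  qed
  have vE3: "(\<integral> z. E z * complex_of_real ((cmod z) ^ (2 * N)) \<partial>dA \<alpha>) = of_real c"
    unfolding E_def using core_k[OF a hol1, of N] iE3 by (simp add: E_def cc)
  have incl: "ellipse_region a0 b L \<subseteq> num_range \<alpha> (wcomp \<psi> (\<lambda>z. lam * z))"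
  proof
    fix w assume "w \<in> ellipse_region a0 b L"
    then have wL: "cmod (w - a0) + cmod (w - b) \<le> sqrt ((cmod (a0 - b))\<^sup>2 + (cmod d)\<^sup>2)"
      by (simp add: ellipse_region_def Lsq)
    obtain x Y where xY: "(cmod x)\<^sup>2 + (cmod Y)\<^sup>2 = 1"
      and wv: "w = of_real ((cmod x)\<^sup>2) * a0 + of_real ((cmod Y)\<^sup>2) * b + x * cnj Y * d"
      using ellipse_fill[OF d0 wL] by blast
    define y where "y = Y / of_real (sqrt c)"
    have ysq: "(cmod y)\<^sup>2 * c = (cmod Y)\<^sup>2"
      using cpos by (simp add: y_def norm_divide power_divide)
    define f where "f = q0 (\<lambda>z. x + y * z ^ N)"
    have fin: "f z = x + y * z ^ N" if "z \<in> ball 0 1" for z using that by (simp add: f_def q0_def)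
    have fout: "f z = 0" if "z \<notin> ball 0 1" for z using that by (simp add: f_def q0_def)
    have fsq: "complex_of_real ((cmod (f z))\<^sup>2) = of_real ((cmod x)\<^sup>2) * E z + (x * cnj y) * (E z * cnj z ^ N)
              + (cnj x * y) * (E z * z ^ N) + of_real ((cmod y)\<^sup>2) * (E z * complex_of_real ((cmod z) ^ (2 * N)))" for z
    proof (cases "z \<in> ball 0 1")
      case True
      have Ez: "E z = 1" using True by (simp add: E_def q0_def)
      show ?thesis unfolding complex_norm_square Ez fin[OF True] pow_cnj_pow[symmetric]
        by (simp add: algebra_simps)
    next
      case False then show ?thesis by (simp add: fout E0)
    qed
    have ifc: "integrable (dA \<alpha>) (\<lambda>z. complex_of_real ((cmod (f z))\<^sup>2))"
      unfolding fsq by (intro Bochner_Integration.integrable_add Bochner_Integration.integrable_mult_right intE iE1 iE2 iE3)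
    have intf: "(\<integral> z. complex_of_real ((cmod (f z))\<^sup>2) \<partial>dA \<alpha>) = 1"
    proof -
      have "(\<integral> z. complex_of_real ((cmod (f z))\<^sup>2) \<partial>dA \<alpha>) = of_real ((cmod x)\<^sup>2) * 1 + (x * cnj y) * 0 + (cnj x * y) * 0 + of_real ((cmod y)\<^sup>2) * of_real c"
        unfolding fsq by (subst integral_lin4[OF intE iE1 iE2 iE3]) (simp only: vE0 vE1 vE2 vE3)
      also have "\<dots> = of_real ((cmod x)\<^sup>2 + (cmod y)\<^sup>2 * c)" by simp
      also have "\<dots> = 1" using xY ysq by simp
      finally show ?thesis .
    qed
    have ifr: "integrable (dA \<alpha>) (\<lambda>z. (cmod (f z))\<^sup>2)"
      using integrable_Re[OF ifc] by simp
    have nrm: "berg_norm \<alpha> f = 1"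
    proof -
      have "complex_of_real (\<integral> z. (cmod (f z))\<^sup>2 \<partial>dA \<alpha>) = 1"
        using intf by (simp add: integral_complex_of_real[symmetric])
      then have "(\<integral> z. (cmod (f z))\<^sup>2 \<partial>dA \<alpha>) = 1" by (metis of_real_eq_1_iff)
      then show ?thesis by (simp add: berg_norm_def)
    qed
    have fB: "f \<in> bergman \<alpha>"
      unfolding bergman_def
    proof (intro CollectI conjI)
      show "f holomorphic_on ball 0 1"
        by (rule holomorphic_transform[of "\<lambda>z. x + y * z ^ N"]) (auto intro!: holomorphic_intros simp: fin)
      have "(\<integral>\<^sup>+ z. ennreal (norm ((cmod (f z))\<^sup>2)) \<partial>dA \<alpha>) < \<infinity>"
        using ifr by (simp add: integrable_iff_bounded)
      then show "(\<integral>\<^sup>+ z. ennreal ((cmod (f z))\<^sup>2) \<partial>dA \<alpha>) < \<infinity>" by simp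
    qed
    have ip: "wcomp \<psi> (\<lambda>z. lam * z) f z * cnj (f z) = of_real ((cmod x)\<^sup>2) * P z + (x * cnj y) * (P z * cnj z ^ N)
              + (cnj x * y * lam ^ N) * (P z * z ^ N) + (of_real ((cmod y)\<^sup>2) * lam ^ N) * (P z * complex_of_real ((cmod z) ^ (2 * N)))" for z
    proof (cases "z \<in> ball 0 1")
      case True
      have lz: "lam * z \<in> ball 0 1" using True lamn by (simp add: norm_mult)
      have Pz: "P z = \<psi> z" using True by (simp add: P_def q0_def)
      show ?thesis unfolding wcomp_def complex_norm_square Pz fin[OF True] fin[OF lz] pow_cnj_pow[symmetric]
        by (simp add: algebra_simps power_mult_distrib)
    next
      case False then show ?thesis by (simp add: wcomp_def fout P0)
    qed
    have inner: "berg_inner \<alpha> (wcomp \<psi> (\<lambda>z. lam * z) f) f = w"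
    proof -
      have "berg_inner \<alpha> (wcomp \<psi> (\<lambda>z. lam * z) f) f = of_real ((cmod x)\<^sup>2) * a0 + (x * cnj y) * (tN * of_real c)
              + (cnj x * y * lam ^ N) * 0 + (of_real ((cmod y)\<^sup>2) * lam ^ N) * (a0 * of_real c)"
        unfolding berg_inner_def ip by (subst integral_lin4[OF intP iP1 iP2 iP3]) (simp only: vP0 vP1 vP2 vP3)
      also have "\<dots> = w"
      proof -
        have sc: "complex_of_real (sqrt c) * complex_of_real (sqrt c) = complex_of_real c"
          using cpos by (simp flip: of_real_mult)
        have s1: "(x * cnj y) * (tN * of_real c) = x * cnj Y * d"
          using cpos by (simp add: y_def d_def field_simps sc)
        have s2: "(of_real ((cmod y)\<^sup>2) * lam ^ N) * (a0 * of_real c) = of_real ((cmod Y)\<^sup>2) * b"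
          unfolding ysq[symmetric] bv by (simp add: algebra_simps)
        show ?thesis unfolding wv s1[symmetric] s2[symmetric] by simp
      qed
      finally show ?thesis .
    qed
    show "w \<in> num_range \<alpha> (wcomp \<psi> (\<lambda>z. lam * z))"
      unfolding num_range_def using fB nrm inner by blast
  qed
  have main: "ellipse_region a0 b L \<subseteq> num_range \<alpha> (wcomp \<psi> (\<lambda>z. lam * z))
            \<and> ellipse_minor_axis a0 b L = sqrt c * cmod (taylor_coeff \<psi> N)"
    using incl minor by (simp add: tN_def)
  show ?thesis
    using main unfolding Let_def lam_def N_def c_def a0_def b_def L_def .
qed

end
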